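(* Every finite, full-dimensional, lattice-convex set $X \subseteq \mathbb{Z}^3$ satisfies $\mathrm{rc}_\ell(X) \ge 4$.
   Context: A set $X \subseteq \mathbb{Z}^d$ is lattice-convex if $\mathrm{conv}(X) \cap \mathbb{Z}^d = X$. For $Y \subseteq \mathbb{Z}^d$, $\mathrm{rc}(X,Y)$ is the smallest number of inequalities in a linear system $Ax \le b$ satisfied by all points of $X$ and such that each point of $Y\setminus X$ violates at least one inequality; with $B_t = [-t,t]^d\cap\mathbb{Z}^d$, $\mathrm{rc}_\ell(X) = \max_{t\in\mathbb{Z}_{>0}} \mathrm{rc}(X,B_t)$. *)

theory Defs
  imports "HOL-Analysis.Analysis" "HOL-Library.Extended_Nat"
begin

text \<open>Points of Z^d are modelled as integer vectors inside real^'d.\<close>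

definition lattice_points :: "(real^'n) set" where
  "lattice_points = {x. \<forall>i. x $ i \<in> \<int>}"

definition lattice_convex :: "(real^'n) set \<Rightarrow> bool" where
  "lattice_convex X \<longleftrightarrow> X \<subseteq> lattice_points \<and> convex hull X \<inter> lattice_points = X"

definition box_B :: "nat \<Rightarrow> (real^'n) set" where
  "box_B t = {x \<in> lattice_points. \<forall>i. \<bar>x $ i\<bar> \<le> real t}"

definition rc :: "(real^'n) set \<Rightarrow> (real^'n) set \<Rightarrow> nat" where
  "rc X Y = (LEAST k. \<exists>(a :: nat \<Rightarrow> real^'n) (b :: nat \<Rightarrow> real).
      (\<forall>i<k. \<forall>x\<in>X. a i \<bullet> x \<le> b i) \<and>
      (\<forall>y\<in>Y - X. \<exists>i<k. a i \<bullet> y > b i))"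

definition rc_l :: "(real^'n) set \<Rightarrow> enat" where
  "rc_l X = (SUP t\<in>{t::nat. t > 0}. enat (rc X (box_B t)))"

end

theory Submission
  imports Defs
begin


lemma lattice_pointsI: "(\<And>i. x $ i \<in> \<int>) \<Longrightarrow> x \<in> lattice_points"
  by (simp add: lattice_points_def)

lemma lattice_pointsD: "x \<in> lattice_points \<Longrightarrow> x $ i \<in> \<int>"
  by (simp add: lattice_points_def)

lemma lattice_add: "x \<in> lattice_points \<Longrightarrow> y \<in> lattice_points \<Longrightarrow> x + y \<in> lattice_points"
  by (auto simp: lattice_points_def)

lemma lattice_diff: "x \<in> lattice_points \<Longrightarrow> y \<in> lattice_points \<Longrightarrow> x - y \<in> lattice_points"
  by (auto simp: lattice_points_def)

lemma lattice_scale: "x \<in> lattice_points \<Longrightarrow> real K *\<^sub>R x \<in> lattice_points"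
  by (auto simp: lattice_points_def)

lemma lattice_axis: "axis j (1::real) \<in> lattice_points"
  by (auto simp: lattice_points_def axis_def)

lemma finite_box_B: "finite (box_B t :: (real^'n) set)"
proof -
  let ?g = "\<lambda>f. (\<chi> i. real_of_int (f i)) :: real^'n"
  have "box_B t \<subseteq> ?g ` (PiE UNIV (\<lambda>_. {-int t..int t}))"
  proof
    fix x :: "real^'n" assume x: "x \<in> box_B t"
    define f where "f = (\<lambda>i. \<lfloor>x $ i\<rfloor>)"
    have xi: "x $ i = of_int (f i)" for i
      using x by (auto simp: box_B_def lattice_points_def f_def elim!: Ints_cases)
    have "x = ?g f" by (simp add: vec_eq_iff xi)
    moreover have "f \<in> PiE UNIV (\<lambda>_. {-int t..int t})"
    proof -
      have "\<bar>x $ i\<bar> \<le> real t" for i using x by (auto simp: box_B_def)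
      hence "\<bar>real_of_int (f i)\<bar> \<le> real t" for i using xi by metis
      hence "\<bar>f i\<bar> \<le> int t" for i by (metis of_int_abs of_int_le_iff of_int_of_nat_eq)
      hence "-int t \<le> f i \<and> f i \<le> int t" for i by (metis abs_le_iff minus_le_iff)
      thus ?thesis by (auto simp: PiE_def extensional_def)
    qed
    ultimately show "x \<in> ?g ` (PiE UNIV (\<lambda>_. {-int t..int t}))" by blast
  qed
  thus ?thesis by (rule finite_subset) (intro finite_imageI finite_PiE; simp)
qed

lemma box_B_lattice: "box_B t \<subseteq> lattice_points"
  by (auto simp: box_B_def)

lemma rc_exists:
  fixes X Y :: "(real^'n) set"
  assumes "finite X" "finite Y" "lattice_convex X" "Y \<subseteq> lattice_points"
  shows "\<exists>k (a :: nat \<Rightarrow> real^'n) (b :: nat \<Rightarrow> real). (\<forall>i<k. \<forall>x\<in>X. a i \<bullet> x \<le> b i) \<and> (\<forall>y\<in>Y - X. \<exists>i<k. a i \<bullet> y > b i)"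
proof -
  have sep: "\<exists>a b. (\<forall>x\<in>X. a \<bullet> x \<le> b) \<and> a \<bullet> y > b" if y: "y \<in> Y - X" for y
  proof -
    have "y \<notin> convex hull X" using y assms(3,4) by (auto simp: lattice_convex_def)
    moreover have "closed (convex hull X)"
      by (simp add: assms(1) compact_imp_closed finite_imp_compact_convex_hull)
    ultimately obtain a b where ab: "a \<bullet> y < b" "\<forall>x\<in>convex hull X. b < a \<bullet> x"
      using separating_hyperplane_closed_point[of "convex hull X" y] convex_convex_hull by blast
    have "\<forall>x\<in>X. (-a) \<bullet> x \<le> - b" using ab(2) hull_subset[of X convex] by fastforce
    moreover have "(-a) \<bullet> y > -b" using ab(1) by simp
    ultimately show ?thesis by blast
  qed
  then obtain A B where AB: "\<And>y. y \<in> Y - X \<Longrightarrow> (\<forall>x\<in>X. A y \<bullet> x \<le> B y) \<and> A y \<bullet> y > B y"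
    by metis
  obtain h where h: "bij_betw h {0..<card (Y - X)} (Y - X)"
    using ex_bij_betw_nat_finite assms(2) by blast
  show ?thesis
  proof (intro exI conjI)
    show "\<forall>i<card (Y - X). \<forall>x\<in>X. (A \<circ> h) i \<bullet> x \<le> (B \<circ> h) i"
    proof (intro allI impI ballI)
      fix i x assume i: "i < card (Y - X)" and x: "x \<in> X"
      have "h i \<in> Y - X" using h i by (auto simp: bij_betw_def)
      thus "(A \<circ> h) i \<bullet> x \<le> (B \<circ> h) i" using AB x by auto
    qed
    show "\<forall>y\<in>Y - X. \<exists>i<card (Y - X). (A \<circ> h) i \<bullet> y > (B \<circ> h) i"
    proof
      fix y assume y: "y \<in> Y - X"
      then obtain i where "i \<in> {0..<card (Y - X)}" "h i = y" using h by (metis bij_betw_def imageE)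
      thus "\<exists>i<card (Y - X). (A \<circ> h) i \<bullet> y > (B \<circ> h) i" using AB[OF y] by auto
    qed
  qed
qed

lemma width_bound:
  fixes X :: "(real^3) set"
  assumes "finite X" "aff_dim X = 3" "x0 \<in> X"
  shows "\<exists>C>0. \<forall>a. norm a \<le> C * Max ((\<lambda>y. \<bar>a \<bullet> (y - x0)\<bar>) ` X)"
proof -
  let ?Y = "(\<lambda>x. x - x0) ` X"
  have aff: "affine hull X = UNIV" using assms(2) aff_dim_eq_full[of X] by simp
  have "(\<lambda>x. x - x0) ` UNIV = (UNIV :: (real^3) set)"
  proof -
    have "y = (y + x0) - x0" for y :: "real^3" by simp
    thus ?thesis by blast
  qed
  hence sp: "span ?Y = UNIV" using diffs_affine_hull_span[OF assms(3)] aff by simp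
  have fin: "finite ?Y" using assms(1) by simp
  have "\<forall>j. \<exists>c. axis j (1::real) = (\<Sum>v\<in>?Y. c v *\<^sub>R v)"
  proof
    fix j :: 3
    have "axis j (1::real) \<in> range (\<lambda>u. \<Sum>v\<in>?Y. u v *\<^sub>R v)"
      using span_finite[OF fin] sp by simp
    thus "\<exists>c. axis j (1::real) = (\<Sum>v\<in>?Y. c v *\<^sub>R v)" by blast
  qed
  then obtain c where c: "\<And>j. axis j (1::real) = (\<Sum>v\<in>?Y. c j v *\<^sub>R v)" by metis
  define C where "C = 1 + (\<Sum>j\<in>UNIV. \<Sum>v\<in>?Y. \<bar>c j v\<bar>)"
  have C0: "(\<Sum>j\<in>UNIV. \<Sum>v\<in>?Y. \<bar>c j v\<bar>) \<ge> 0" by (intro sum_nonneg) auto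
  show ?thesis
  proof (intro exI conjI allI)
    show "C > 0" using C0 by (simp add: C_def)
    fix a :: "real^3"
    define W where "W = Max ((\<lambda>y. \<bar>a \<bullet> (y - x0)\<bar>) ` X)"
    have Wge: "\<bar>a \<bullet> v\<bar> \<le> W" if "v \<in> ?Y" for v
      using that assms(1) by (auto simp: W_def intro!: Max_ge)
    have W0: "W \<ge> 0" using Wge[of "x0 - x0"] assms(3) by force
    have comp: "\<bar>a $ j\<bar> \<le> (\<Sum>v\<in>?Y. \<bar>c j v\<bar>) * W" for j
    proof -
      have "a $ j = a \<bullet> axis j 1" by (simp add: inner_axis)
      also have "\<dots> = (\<Sum>v\<in>?Y. c j v * (a \<bullet> v))"
        by (subst c) (simp add: inner_sum_right)
      finally have "\<bar>a $ j\<bar> \<le> (\<Sum>v\<in>?Y. \<bar>c j v * (a \<bullet> v)\<bar>)"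
        using sum_abs[of "\<lambda>v. c j v * (a \<bullet> v)" ?Y] by simp
      also have "\<dots> \<le> (\<Sum>v\<in>?Y. \<bar>c j v\<bar> * W)"
        by (intro sum_mono) (auto simp: abs_mult intro!: mult_left_mono Wge)
      finally show ?thesis by (simp add: sum_distrib_right)
    qed
    have "norm a \<le> (\<Sum>j\<in>UNIV. \<bar>a $ j\<bar>)" by (rule norm_le_l1_cart)
    also have "\<dots> \<le> (\<Sum>j\<in>UNIV. (\<Sum>v\<in>?Y. \<bar>c j v\<bar>) * W)" by (intro sum_mono comp)
    also have "\<dots> = (\<Sum>j\<in>UNIV. \<Sum>v\<in>?Y. \<bar>c j v\<bar>) * W" by (simp add: sum_distrib_right)
    also have "\<dots> \<le> C * W" using W0 by (intro mult_right_mono) (auto simp: C_def)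
    finally show "norm a \<le> C * Max ((\<lambda>y. \<bar>a \<bullet> (y - x0)\<bar>) ` X)" by (simp add: W_def)
  qed
qed



lemma sum3_bound:
  fixes f :: "3 \<Rightarrow> real"
  assumes "\<And>j. f j \<le> c"
  shows "(\<Sum>j\<in>UNIV. f j) \<le> 3 * c"
  using sum_bounded_above[of UNIV f c] assms by simp

lemma round_lattice:
  fixes q :: "real^3"
  shows "\<exists>u\<in>lattice_points. norm (u - q) \<le> 3/2"
proof -
  define u :: "real^3" where "u = (\<chi> j. of_int \<lfloor>q $ j + 1/2\<rfloor>)"
  have "u \<in> lattice_points" by (auto simp: u_def lattice_points_def)
  moreover have "\<bar>(u - q) $ j\<bar> \<le> 1/2" for j
  proof -
    have "real_of_int \<lfloor>q $ j + 1/2\<rfloor> \<le> q $ j + 1/2 \<and> q $ j + 1/2 < real_of_int (\<lfloor>q $ j + 1/2\<rfloor> + 1)"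
      by (rule floor_correct)
    moreover have e: "(u - q) $ j = real_of_int \<lfloor>q $ j + 1/2\<rfloor> - q $ j" by (simp add: u_def)
    ultimately show ?thesis unfolding e abs_le_iff by linarith
  qed
  hence "norm (u - q) \<le> 3 * (1/2)"
    using norm_le_l1_cart[of "u - q"] sum3_bound[of "\<lambda>j. \<bar>(u - q) $ j\<bar>" "1/2"] by (meson order_trans)
  ultimately show ?thesis by auto
qed

lemma dirichlet3:
  fixes v :: "real^3" and Q :: nat
  assumes Q: "Q \<ge> 1"
  shows "\<exists>m::nat. 1 \<le> m \<and> m \<le> Q^3 \<and> (\<exists>z\<in>lattice_points. norm (real m *\<^sub>R v - z) \<le> 3 / real Q)"
proof -
  define cell where "cell n = (\<lambda>j::3. \<lfloor>real Q * frac (real n * v $ j)\<rfloor>)" for n :: nat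
  have rng: "cell n \<in> PiE UNIV (\<lambda>_. {0..<int Q})" for n
  proof -
    have "0 \<le> \<lfloor>real Q * frac (real n * v $ j)\<rfloor> \<and> \<lfloor>real Q * frac (real n * v $ j)\<rfloor> < int Q" for j
    proof -
      have f: "0 \<le> frac (real n * v $ j)" "frac (real n * v $ j) < 1" by (auto simp: frac_lt_1)
      have "0 \<le> real Q * frac (real n * v $ j)" using f by simp
      moreover have "real Q * frac (real n * v $ j) < real Q" using f Q by simp
      ultimately show ?thesis by linarith
    qed
    thus ?thesis by (auto simp: cell_def PiE_def extensional_def)
  qed
  have card: "card (PiE (UNIV::3 set) (\<lambda>_. {0..<int Q})) = Q^3" by (simp add: card_PiE)
  have "\<not> inj_on cell {0..Q^3}"
  proof
    assume "inj_on cell {0..Q^3}"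
    hence "card {0..Q^3} \<le> card (PiE (UNIV::3 set) (\<lambda>_. {0..<int Q}))"
      by (rule card_inj_on_le) (use rng in \<open>auto intro!: finite_PiE\<close>)
    thus False using card by simp
  qed
  then obtain n1 n2 where n: "n1 \<in> {0..Q^3}" "n2 \<in> {0..Q^3}" "n1 \<noteq> n2" "cell n1 = cell n2"
    by (auto simp: inj_on_def)
  obtain p q where pq: "p < q" "q \<le> Q^3" "cell p = cell q"
  proof (cases "n1 < n2")
    case True thus ?thesis using that[of n1 n2] n by auto
  next
    case False thus ?thesis using that[of n2 n1] n by auto
  qed
  define z :: "real^3" where "z = (\<chi> j. of_int (\<lfloor>real q * v $ j\<rfloor> - \<lfloor>real p * v $ j\<rfloor>))"
  have zl: "z \<in> lattice_points" by (auto simp: z_def lattice_points_def)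
  have comp: "\<bar>(real (q - p) *\<^sub>R v - z) $ j\<bar> \<le> 1 / real Q" for j
  proof -
    have c: "\<lfloor>real Q * frac (real p * v $ j)\<rfloor> = \<lfloor>real Q * frac (real q * v $ j)\<rfloor>"
      using pq(3) unfolding cell_def by metis
    hence "\<bar>real Q * frac (real p * v $ j) - real Q * frac (real q * v $ j)\<bar> < 1" by linarith
    hence "real Q * \<bar>frac (real p * v $ j) - frac (real q * v $ j)\<bar> < 1"
      by (simp add: abs_mult right_diff_distrib[symmetric])
    hence lt: "\<bar>frac (real p * v $ j) - frac (real q * v $ j)\<bar> < 1 / real Q"
      using Q by (simp add: field_simps)
    have "(real (q - p) *\<^sub>R v - z) $ j = frac (real q * v $ j) - frac (real p * v $ j)"
      using pq(1) by (simp add: z_def frac_def of_nat_diff algebra_simps)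
    thus ?thesis using lt by simp
  qed
  have "norm (real (q - p) *\<^sub>R v - z) \<le> 3 * (1 / real Q)"
    using norm_le_l1_cart[of "real (q - p) *\<^sub>R v - z"] sum3_bound[of "\<lambda>j. \<bar>(real (q - p) *\<^sub>R v - z) $ j\<bar>", OF comp]
    by linarith
  moreover have "1 \<le> q - p" "q - p \<le> Q^3" using pq by auto
  ultimately show ?thesis using zl by (intro exI[of _ "q - p"]) auto
qed

lemma linalg3:
  fixes \<alpha> :: "nat \<Rightarrow> real^3" and k :: nat
  assumes "k \<le> 3"
  shows "(\<exists>p. \<forall>i<k. \<alpha> i \<bullet> p = -1) \<or> (\<exists>v. v \<noteq> 0 \<and> (\<forall>i<k. \<alpha> i \<bullet> v = 0))"
proof -
  define \<beta> where "\<beta> i = (if i < k then \<alpha> i else 0)" for i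
  define idx :: "3 \<Rightarrow> nat" where "idx j = (if j = 1 then 0 else if j = 2 then 1 else 2)" for j
  define f where "f p = (\<chi> j. \<beta> (idx j) \<bullet> p)" for p :: "real^3"
  have lin: "linear f"
    by (auto simp: f_def linear_iff vec_eq_iff inner_add_right)
  have idx: "i < k \<Longrightarrow> \<exists>j. idx j = i" for i
  proof -
    assume "i < k"
    hence "i = 0 \<or> i = 1 \<or> i = 2" using assms by auto
    moreover have "idx 1 = 0" "idx 2 = 1" "idx 3 = 2" by (auto simp: idx_def)
    ultimately show ?thesis by blast
  qed
  show ?thesis
  proof (cases "inj f")
    case True
    hence "surj f" using linear_inj_imp_surj lin by blast
    then obtain p where p: "f p = (\<chi> j. -1)" by (metis surjD)
    have "\<alpha> i \<bullet> p = -1" if ik: "i < k" for i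
    proof -
      obtain j where "idx j = i" using idx[OF ik] by blast
      hence "f p $ j = \<alpha> i \<bullet> p" using ik by (simp add: f_def \<beta>_def)
      thus ?thesis using p by simp
    qed
    thus ?thesis by blast
  next
    case False
    then obtain x y where xy: "x \<noteq> y" "f x = f y" by (auto simp: inj_def)
    have "f (x - y) = 0" using xy linear_diff[OF lin] by simp
    have "\<alpha> i \<bullet> (x - y) = 0" if ik: "i < k" for i
    proof -
      obtain j where "idx j = i" using idx[OF ik] by blast
      hence "f (x - y) $ j = \<alpha> i \<bullet> (x - y)" using ik by (simp add: f_def \<beta>_def)
      thus ?thesis using \<open>f (x - y) = 0\<close> by simp
    qed
    hence "x - y \<noteq> 0 \<and> (\<forall>i<k. \<alpha> i \<bullet> (x - y) = 0)" using xy(1) by auto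
    thus ?thesis by blast
  qed
qed



lemma main_bound:
  fixes X :: "(real^3) set"
  assumes fin: "finite X" and dim: "aff_dim X = 3" and lat: "X \<subseteq> lattice_points"
  shows "\<exists>T>0. \<forall>k (a::nat \<Rightarrow> real^3) b. k < 4 \<longrightarrow> (\<forall>i<k. \<forall>x\<in>X. a i \<bullet> x \<le> b i) \<longrightarrow>
           \<not>(\<forall>y\<in>box_B T - X. \<exists>i<k. a i \<bullet> y > b i)"
proof -
  have ne: "X \<noteq> {}" using dim by auto
  then obtain x0 where x0: "x0 \<in> X" by blast
  define W where "W a = Max ((\<lambda>y. \<bar>a \<bullet> (y - x0)\<bar>) ` X)" for a :: "real^3"
  obtain C0 where C0: "C0 > 0" "\<And>a. norm a \<le> C0 * W a"
    using width_bound[OF fin dim x0] unfolding W_def by blast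
  have Wge: "\<bar>a \<bullet> (y - x0)\<bar> \<le> W a" if "y \<in> X" for a y
    using that fin by (auto simp: W_def intro!: Max_ge)
  have Wex: "\<exists>y\<in>X. W a = \<bar>a \<bullet> (y - x0)\<bar>" for a
  proof -
    have "W a \<in> (\<lambda>y. \<bar>a \<bullet> (y - x0)\<bar>) ` X" unfolding W_def using fin ne by (intro Max_in) auto
    thus ?thesis by auto
  qed
  have W0: "W a \<ge> 0" for a using Wge[OF x0, of a] by linarith
  have Wpos: "W a > 0" if "a \<noteq> 0" for a
  proof -
    have "0 < norm a" using that by simp
    also have "\<dots> \<le> C0 * W a" by (rule C0(2))
    finally show ?thesis using C0(1) by (simp add: zero_less_mult_iff)
  qed
  define \<rho> where "\<rho> = Max (norm ` X)"
  have \<rho>: "norm x \<le> \<rho>" if "x \<in> X" for x using that fin by (auto simp: \<rho>_def intro!: Max_ge)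
  have \<rho>0: "\<rho> \<ge> 0" using \<rho>[OF x0] norm_ge_zero[of x0] by linarith
  define C where "C = max C0 1"
  have C1: "C \<ge> 1" and CC0: "C \<ge> C0" by (auto simp: C_def)
  define K :: nat where "K = nat \<lceil>4 * \<rho>\<rceil> + 1"
  have K: "real K > 4 * \<rho>" "real K \<ge> 1" unfolding K_def by linarith+
  define Q :: nat where "Q = nat \<lceil>6 * C * real K\<rceil> + 6"
  have Q: "real Q \<ge> 6 * C * real K" "real Q \<ge> 6" "Q \<ge> 1" unfolding Q_def by linarith+
  define \<epsilon> :: real where "\<epsilon> = 1 / (4 * real K * real Q ^ 3)"
  have \<epsilon>0: "\<epsilon> > 0" using K Q by (simp add: \<epsilon>_def)
  define L :: real where "L = 2 * C / \<epsilon>"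
  have L\<epsilon>: "L * \<epsilon> = 2 * C" using \<epsilon>0 by (simp add: L_def)
  have L0: "L \<ge> 0" using C1 \<epsilon>0 by (simp add: L_def)
  define T :: nat where "T = nat \<lceil>\<rho> + L + 2 + real K * real Q ^ 3 + 3 * real K\<rceil> + 1"
  have T: "real T \<ge> \<rho> + L + 2 + real K * real Q ^ 3 + 3 * real K" unfolding T_def by linarith
  have KQ0: "real K * real Q ^ 3 \<ge> 0" by simp
  have inbox: "y \<in> box_B T" if "y \<in> lattice_points" "norm y \<le> real T" for y
  proof -
    have "\<bar>y $ i\<bar> \<le> real T" for i using component_le_norm_cart[of y i] that(2) by linarith
    thus ?thesis using that(1) by (auto simp: box_B_def)
  qed
  show ?thesis
  proof (intro exI[of _ T] conjI allI impI notI)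
    show "T > 0" by (simp add: T_def)
    fix k and a :: "nat \<Rightarrow> real^3" and b
    assume k4: "k < 4" and valid: "\<forall>i<k. \<forall>x\<in>X. a i \<bullet> x \<le> b i"
       and cut: "\<forall>y\<in>box_B T - X. \<exists>i<k. a i \<bullet> y > b i"
    have k3: "k \<le> 3" using k4 by simp
    define \<alpha> where "\<alpha> i = (1 / W (a i)) *\<^sub>R a i" for i
    have \<alpha>norm: "norm (\<alpha> i) \<le> C" for i
    proof (cases "a i = 0")
      case True thus ?thesis using C1 by (simp add: \<alpha>_def)
    next
      case False
      hence Wp: "W (a i) > 0" by (rule Wpos)
      have "norm (\<alpha> i) = norm (a i) / W (a i)" using Wp by (simp add: \<alpha>_def)
      also have "\<dots> \<le> C0" using C0(2)[of "a i"] Wp by (simp add: divide_le_eq mult.commute)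
      finally show ?thesis using CC0 by linarith
    qed
    have \<alpha>bound: "\<bar>\<alpha> i \<bullet> x\<bar> \<le> C * norm x" for i x
    proof -
      have "\<bar>\<alpha> i \<bullet> x\<bar> \<le> norm (\<alpha> i) * norm x" by (rule Cauchy_Schwarz_ineq2)
      also have "\<dots> \<le> C * norm x" by (intro mult_right_mono \<alpha>norm) auto
      finally show ?thesis .
    qed
    have \<alpha>pos: "\<alpha> i \<bullet> u > 0" if "a i \<bullet> u > 0" for i u
    proof -
      have "a i \<noteq> 0" using that by auto
      hence "W (a i) > 0" by (rule Wpos)
      thus ?thesis using that by (simp add: \<alpha>_def)
    qed
    have I: "\<exists>i<k. \<alpha> i \<bullet> u > 0" if u: "u \<in> lattice_points" "u \<noteq> 0" "norm u \<le> L + 2" for u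
    proof -
      have "Max ((\<lambda>x. u \<bullet> x) ` X) \<in> (\<lambda>x. u \<bullet> x) ` X" using fin ne by (intro Max_in) auto
      then obtain y where y: "y \<in> X" "u \<bullet> y = Max ((\<lambda>x. u \<bullet> x) ` X)" by auto
      have ymax: "u \<bullet> x \<le> u \<bullet> y" if "x \<in> X" for x using y(2) that fin by (auto intro!: Max_ge)
      have "u \<bullet> u > 0" using u(2) by simp
      hence "u \<bullet> (y + u) > u \<bullet> y" by (simp add: inner_add_right)
      hence notin: "y + u \<notin> X" using ymax by force
      have "norm (y + u) \<le> norm y + norm u" by (rule norm_triangle_ineq)
      also have "\<dots> \<le> real T" using \<rho>[OF y(1)] u(3) T KQ0 K by linarith
      finally have "y + u \<in> box_B T"
        using inbox lattice_add lat y(1) u(1) by blast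
      then obtain i where i: "i < k" "a i \<bullet> (y + u) > b i" using cut notin by blast
      have "a i \<bullet> y \<le> b i" using valid i(1) y(1) by blast
      hence "a i \<bullet> u > 0" using i(2) by (simp add: inner_add_right)
      thus ?thesis using \<alpha>pos i(1) by blast
    qed
    have II: "\<exists>i<k. \<bar>\<alpha> i \<bullet> w\<bar> > 1"
      if w: "w \<in> lattice_points" "norm w > 2 * \<rho>" "norm w \<le> real K * real Q ^ 3 + 3 * real K" for w
    proof (rule ccontr)
      assume "\<not> (\<exists>i<k. \<bar>\<alpha> i \<bullet> w\<bar> > 1)"
      hence small: "\<bar>\<alpha> i \<bullet> w\<bar> \<le> 1" if "i < k" for i using that by force
      have aw: "\<bar>a i \<bullet> w\<bar> \<le> W (a i)" if "i < k" for i
      proof (cases "a i = 0")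
        case True thus ?thesis using W0 by simp
      next
        case False
        hence Wp: "W (a i) > 0" by (rule Wpos)
        have "\<bar>\<alpha> i \<bullet> w\<bar> = \<bar>a i \<bullet> w\<bar> / W (a i)" using Wp by (simp add: \<alpha>_def)
        thus ?thesis using small[OF that] Wp by (simp add: divide_le_eq)
      qed
      have far: "x + w \<notin> X \<and> x - w \<notin> X" if "x \<in> X" for x
      proof -
        have "x + w \<notin> X"
        proof
          assume "x + w \<in> X"
          hence "norm (x + w) \<le> \<rho>" by (rule \<rho>)
          moreover have "norm w \<le> norm (x + w) + norm x" using norm_triangle_ineq4[of "x + w" x] by simp
          ultimately show False using \<rho>[OF that] w(2) by linarith
        qed
        moreover have "x - w \<notin> X"
        proof
          assume "x - w \<in> X"
          hence "norm (x - w) \<le> \<rho>" by (rule \<rho>)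
          moreover have "norm w \<le> norm (x - w) + norm x" using norm_triangle_ineq4[of x "x - w"] by simp
          ultimately show False using \<rho>[OF that] w(2) by linarith
        qed
        ultimately show ?thesis by blast
      qed
      have boxp: "x + w \<in> box_B T" if "x \<in> X" for x
      proof -
        have "norm (x + w) \<le> norm x + norm w" by (rule norm_triangle_ineq)
        also have "\<dots> \<le> real T" using \<rho>[OF that] w(3) T L0 by linarith
        finally show ?thesis using inbox lattice_add lat that w(1) by blast
      qed
      have boxm: "x - w \<in> box_B T" if "x \<in> X" for x
      proof -
        have "norm (x - w) \<le> norm x + norm w" by (rule norm_triangle_ineq4)
        also have "\<dots> \<le> real T" using \<rho>[OF that] w(3) T L0 by linarith
        finally show ?thesis using inbox lattice_diff lat that w(1) by blast
      qed
      define Ip where "Ip = {i. i < k \<and> a i \<bullet> w > 0}"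
      define Im where "Im = {i. i < k \<and> a i \<bullet> w < 0}"
      have cutp: "\<exists>i\<in>Ip. a i \<bullet> (x + w) > b i" if xX: "x \<in> X" for x
      proof -
        obtain i where i: "i < k" "a i \<bullet> (x + w) > b i" using cut far[OF xX] boxp[OF xX] by blast
        have "a i \<bullet> x \<le> b i" using valid i(1) xX by blast
        hence "a i \<bullet> w > 0" using i(2) by (simp add: inner_add_right)
        thus ?thesis using i by (auto simp: Ip_def)
      qed
      have cutm: "\<exists>i\<in>Im. a i \<bullet> (x - w) > b i" if xX: "x \<in> X" for x
      proof -
        obtain i where i: "i < k" "a i \<bullet> (x - w) > b i" using cut far[OF xX] boxm[OF xX] by blast
        have "a i \<bullet> x \<le> b i" using valid i(1) xX by blast
        hence "a i \<bullet> w < 0" using i(2) by (simp add: inner_diff_right)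
        thus ?thesis using i by (auto simp: Im_def)
      qed
      have keyp: "\<exists>z\<in>X. a i \<bullet> (z + w) \<le> b i" if "i \<in> Ip" for i
      proof -
        have ik: "i < k" using that by (simp add: Ip_def)
        obtain y where y: "y \<in> X" "W (a i) = \<bar>a i \<bullet> (y - x0)\<bar>" using Wex by blast
        have le: "a i \<bullet> w \<le> \<bar>a i \<bullet> (y - x0)\<bar>" using aw[OF ik] y(2) by linarith
        show ?thesis
        proof (cases "a i \<bullet> (y - x0) \<ge> 0")
          case True
          hence "a i \<bullet> (x0 + w) \<le> a i \<bullet> y" using le by (simp add: inner_add_right inner_diff_right)
          also have "\<dots> \<le> b i" using valid ik y(1) by blast
          finally show ?thesis using x0 by blast
        next
          case False
          hence "a i \<bullet> (y + w) \<le> a i \<bullet> x0" using le by (simp add: inner_add_right inner_diff_right)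
          also have "\<dots> \<le> b i" using valid ik x0 by blast
          finally show ?thesis using y(1) by blast
        qed
      qed
      have keym: "\<exists>z\<in>X. a i \<bullet> (z - w) \<le> b i" if "i \<in> Im" for i
      proof -
        have ik: "i < k" using that by (simp add: Im_def)
        obtain y where y: "y \<in> X" "W (a i) = \<bar>a i \<bullet> (y - x0)\<bar>" using Wex by blast
        have le: "- (a i \<bullet> w) \<le> \<bar>a i \<bullet> (y - x0)\<bar>" using aw[OF ik] y(2) by linarith
        show ?thesis
        proof (cases "a i \<bullet> (y - x0) \<ge> 0")
          case True
          hence "a i \<bullet> (x0 - w) \<le> a i \<bullet> y" using le by (simp add: inner_diff_right)
          also have "\<dots> \<le> b i" using valid ik y(1) by blast
          finally show ?thesis using x0 by blast
        next
          case False
          hence "a i \<bullet> (y - w) \<le> a i \<bullet> x0" using le by (simp add: inner_diff_right)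
          also have "\<dots> \<le> b i" using valid ik x0 by blast
          finally show ?thesis using y(1) by blast
        qed
      qed
      have finI: "finite Ip" "finite Im" by (auto simp: Ip_def Im_def)
      have "Ip \<inter> Im = {}" by (auto simp: Ip_def Im_def)
      hence "card Ip + card Im = card (Ip \<union> Im)" using finI by (simp add: card_Un_disjoint)
      also have "\<dots> \<le> card {..<k}" by (intro card_mono) (auto simp: Ip_def Im_def)
      finally have "card Ip + card Im \<le> 3" using k3 by simp
      hence "card Ip \<le> 1 \<or> card Im \<le> 1" by linarith
      thus False
      proof
        assume c: "card Ip \<le> 1"
        obtain i0 where i0: "i0 \<in> Ip" using cutp[OF x0] by blast
        obtain z where z: "z \<in> X" "a i0 \<bullet> (z + w) \<le> b i0" using keyp[OF i0] by blast
        obtain i1 where i1: "i1 \<in> Ip" "a i1 \<bullet> (z + w) > b i1" using cutp[OF z(1)] by blast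
        have "i0 = i1" using c finI(1) i0 i1 card_le_Suc0_iff_eq[of Ip] by auto
        thus False using z(2) i1(2) by simp
      next
        assume c: "card Im \<le> 1"
        obtain i0 where i0: "i0 \<in> Im" using cutm[OF x0] by blast
        obtain z where z: "z \<in> X" "a i0 \<bullet> (z - w) \<le> b i0" using keym[OF i0] by blast
        obtain i1 where i1: "i1 \<in> Im" "a i1 \<bullet> (z - w) > b i1" using cutm[OF z(1)] by blast
        have "i0 = i1" using c finI(2) i0 i1 card_le_Suc0_iff_eq[of Im] by auto
        thus False using z(2) i1(2) by simp
      qed
    qed
    have k1: "k \<ge> 1"
    proof -
      have "axis 1 (1::real) \<noteq> (0::real^3)" by (simp add: axis_eq_0_iff)
      moreover have "norm (axis 1 (1::real) :: real^3) \<le> L + 2" using L0 by simp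
      ultimately obtain i where "i < k" using I[OF lattice_axis] by blast
      thus ?thesis by simp
    qed
    have A: "\<not> (\<forall>i<k. \<alpha> i \<bullet> p \<le> - \<epsilon>)" if p: "norm p \<le> 1" for p
    proof
      assume pe: "\<forall>i<k. \<alpha> i \<bullet> p \<le> - \<epsilon>"
      obtain u where u: "u \<in> lattice_points" "norm (u - L *\<^sub>R p) \<le> 3/2"
        using round_lattice by blast
      have neg: "\<alpha> i \<bullet> u < 0" if ik: "i < k" for i
      proof -
        have "\<alpha> i \<bullet> u = L * (\<alpha> i \<bullet> p) + \<alpha> i \<bullet> (u - L *\<^sub>R p)"
          by (simp add: inner_diff_right)
        moreover have "L * (\<alpha> i \<bullet> p) \<le> L * (- \<epsilon>)" using pe ik L0 by (intro mult_left_mono) auto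
        moreover have "\<alpha> i \<bullet> (u - L *\<^sub>R p) \<le> C * (3/2)"
        proof -
          have "\<alpha> i \<bullet> (u - L *\<^sub>R p) \<le> C * norm (u - L *\<^sub>R p)" using \<alpha>bound[of i "u - L *\<^sub>R p"] by linarith
          also have "\<dots> \<le> C * (3/2)" using u(2) C1 by (intro mult_left_mono) auto
          finally show ?thesis .
        qed
        ultimately show ?thesis using L\<epsilon> C1 by (simp add: algebra_simps)
      qed
      have "u \<noteq> 0" using neg[of 0] k1 by auto
      moreover have "norm u \<le> L + 2"
      proof -
        have "norm u \<le> norm (L *\<^sub>R p) + norm (u - L *\<^sub>R p)" using norm_triangle_ineq[of "L *\<^sub>R p" "u - L *\<^sub>R p"] by simp
        moreover have "norm (L *\<^sub>R p) \<le> L" using p L0 by (simp add: mult_left_le)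
        ultimately show ?thesis using u(2) by linarith
      qed
      ultimately obtain i where "i < k" "\<alpha> i \<bullet> u > 0" using I u(1) by blast
      thus False using neg by fastforce
    qed
    obtain v where v: "norm v = 1" "\<And>i. i < k \<Longrightarrow> \<bar>\<alpha> i \<bullet> v\<bar> \<le> \<epsilon>"
    proof -
      from linalg3[OF k3, of \<alpha>] show ?thesis
      proof
        assume "\<exists>p. \<forall>i<k. \<alpha> i \<bullet> p = -1"
        then obtain p0 where p0: "\<And>i. i < k \<Longrightarrow> \<alpha> i \<bullet> p0 = -1" by blast
        have "p0 \<noteq> 0" using p0[of 0] k1 by auto
        hence np: "norm p0 > 0" by simp
        have big: "norm p0 > 1 / \<epsilon>"
        proof (rule ccontr)
          assume "\<not> norm p0 > 1 / \<epsilon>"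
          hence "norm (\<epsilon> *\<^sub>R p0) \<le> 1" using \<epsilon>0 by (simp add: field_simps)
          moreover have "\<forall>i<k. \<alpha> i \<bullet> (\<epsilon> *\<^sub>R p0) \<le> - \<epsilon>" using p0 by simp
          ultimately show False using A by blast
        qed
        show ?thesis
        proof (rule that[of "(1 / norm p0) *\<^sub>R p0"])
          show "norm ((1 / norm p0) *\<^sub>R p0) = 1" using np by simp
          fix i assume ik: "i < k"
          have "\<bar>\<alpha> i \<bullet> ((1 / norm p0) *\<^sub>R p0)\<bar> = 1 / norm p0" using p0[OF ik] np by simp
          also have "\<dots> \<le> \<epsilon>" using big \<epsilon>0 np by (simp add: field_simps)
          finally show "\<bar>\<alpha> i \<bullet> ((1 / norm p0) *\<^sub>R p0)\<bar> \<le> \<epsilon>" .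
        qed
      next
        assume "\<exists>v. v \<noteq> 0 \<and> (\<forall>i<k. \<alpha> i \<bullet> v = 0)"
        then obtain v0 where v0: "v0 \<noteq> 0" "\<And>i. i < k \<Longrightarrow> \<alpha> i \<bullet> v0 = 0" by blast
        show ?thesis
        proof (rule that[of "(1 / norm v0) *\<^sub>R v0"])
          show "norm ((1 / norm v0) *\<^sub>R v0) = 1" using v0(1) by simp
          fix i assume "i < k"
          thus "\<bar>\<alpha> i \<bullet> ((1 / norm v0) *\<^sub>R v0)\<bar> \<le> \<epsilon>" using v0(2) \<epsilon>0 by simp
        qed
      qed
    qed
    obtain m z where m: "1 \<le> m" "m \<le> Q^3" and z: "z \<in> lattice_points" "norm (real m *\<^sub>R v - z) \<le> 3 / real Q"
      using dirichlet3[OF Q(3), of v] by blast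
    define w where "w = real K *\<^sub>R z"
    define lam where "lam = real K * real m"
    have wl: "w \<in> lattice_points" using z(1) by (simp add: w_def lattice_scale)
    have err: "norm (w - lam *\<^sub>R v) \<le> real K * (3 / real Q)"
    proof -
      have "w - lam *\<^sub>R v = - (real K *\<^sub>R (real m *\<^sub>R v - z))" by (simp add: w_def lam_def algebra_simps)
      hence "norm (w - lam *\<^sub>R v) = real K * norm (real m *\<^sub>R v - z)" by simp
      moreover have "real K * norm (real m *\<^sub>R v - z) \<le> real K * (3 / real Q)" using z(2) by (intro mult_left_mono) auto
      ultimately show ?thesis by simp
    qed
    have err2: "real K * (3 / real Q) \<le> real K / 2"
    proof -
      have "real K * 6 \<le> real K * real Q" using Q(2) by (intro mult_left_mono) auto
      thus ?thesis using Q(2) by (simp add: field_simps)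
    qed
    have err3: "C * (real K * (3 / real Q)) \<le> 1/2"
    proof -
      have "C * (real K * (3 / real Q)) = 3 * C * real K / real Q" by simp
      also have "\<dots> \<le> 1/2" using Q(1) Q(2) by (simp add: field_simps)
      finally show ?thesis .
    qed
    have lam1: "lam \<ge> real K"
    proof -
      have "real K * 1 \<le> real K * real m" using m(1) by (intro mult_left_mono) auto
      thus ?thesis by (simp add: lam_def)
    qed
    have lam2: "lam \<le> real K * real Q ^ 3"
    proof -
      have "real m \<le> real Q ^ 3" using m(2) by (metis of_nat_le_iff of_nat_power)
      thus ?thesis by (simp add: lam_def mult_left_mono)
    qed
    have nl: "norm (lam *\<^sub>R v) = lam" using v(1) lam1 K(2) by simp
    have "norm (lam *\<^sub>R v) \<le> norm w + norm (w - lam *\<^sub>R v)" using norm_triangle_ineq4[of w "w - lam *\<^sub>R v"] by simp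
    hence w1: "norm w > 2 * \<rho>" using nl lam1 err err2 K(1) \<rho>0 by linarith
    have "norm w \<le> norm (lam *\<^sub>R v) + norm (w - lam *\<^sub>R v)" using norm_triangle_ineq[of "lam *\<^sub>R v" "w - lam *\<^sub>R v"] by simp
    hence w2: "norm w \<le> real K * real Q ^ 3 + 3 * real K" using nl lam2 err err2 K(2) by linarith
    obtain i where i: "i < k" "\<bar>\<alpha> i \<bullet> w\<bar> > 1" using II[OF wl w1 w2] by blast
    have "\<alpha> i \<bullet> w = \<alpha> i \<bullet> (w - lam *\<^sub>R v) + lam * (\<alpha> i \<bullet> v)" by (simp add: inner_diff_right)
    moreover have "\<bar>\<alpha> i \<bullet> (w - lam *\<^sub>R v)\<bar> \<le> 1/2"
    proof -
      have "\<bar>\<alpha> i \<bullet> (w - lam *\<^sub>R v)\<bar> \<le> C * norm (w - lam *\<^sub>R v)" by (rule \<alpha>bound)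
      also have "\<dots> \<le> C * (real K * (3 / real Q))" using err C1 by (intro mult_left_mono) auto
      finally show ?thesis using err3 by linarith
    qed
    moreover have "\<bar>lam * (\<alpha> i \<bullet> v)\<bar> \<le> 1/4"
    proof -
      have "\<bar>lam * (\<alpha> i \<bullet> v)\<bar> = lam * \<bar>\<alpha> i \<bullet> v\<bar>" using lam1 K(2) by (simp add: abs_mult)
      also have "\<dots> \<le> (real K * real Q ^ 3) * \<epsilon>" using v(2)[OF i(1)] lam2 lam1 K(2) \<epsilon>0
        by (intro mult_mono) auto
      also have "\<dots> = 1/4" using K Q by (simp add: \<epsilon>_def field_simps)
      finally show ?thesis .
    qed
    ultimately have "\<bar>\<alpha> i \<bullet> w\<bar> \<le> 3/4" by linarith
    thus False using i(2) by linarith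
  qed
qed


theorem proposition3p2:
  fixes X :: "(real^3) set"
  assumes "finite X"
    and "aff_dim X = 3"
    and "lattice_convex X"
  shows "rc_l X \<ge> 4"
proof -
  have lat: "X \<subseteq> lattice_points" using assms(3) by (simp add: lattice_convex_def)
  obtain T where T: "T > 0" and noP: "\<forall>k (a::nat \<Rightarrow> real^3) b. k < 4 \<longrightarrow> (\<forall>i<k. \<forall>x\<in>X. a i \<bullet> x \<le> b i) \<longrightarrow>
           \<not>(\<forall>y\<in>box_B T - X. \<exists>i<k. a i \<bullet> y > b i)"
    using main_bound[OF assms(1,2) lat] by blast
  define P where "P = (\<lambda>k. \<exists>(a :: nat \<Rightarrow> real^3) (b :: nat \<Rightarrow> real).
      (\<forall>i<k. \<forall>x\<in>X. a i \<bullet> x \<le> b i) \<and> (\<forall>y\<in>box_B T - X. \<exists>i<k. a i \<bullet> y > b i))"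
  have ex: "\<exists>k. P k" unfolding P_def
    using rc_exists[OF assms(1) finite_box_B assms(3) box_B_lattice] by blast
  have PL: "P (LEAST k. P k)" using LeastI_ex[OF ex] .
  have rcP: "rc X (box_B T) = (LEAST k. P k)" by (simp add: rc_def P_def)
  have ge: "4 \<le> rc X (box_B T)"
  proof (rule ccontr)
    assume "\<not> 4 \<le> rc X (box_B T)"
    hence "(LEAST k. P k) < 4" using rcP by simp
    thus False using PL noP unfolding P_def by blast
  qed
  have "(4::enat) = enat 4" by (simp add: numeral_eq_enat)
  also have "\<dots> \<le> enat (rc X (box_B T))" using ge by simp
  also have "\<dots> \<le> rc_l X" unfolding rc_l_def using T by (intro SUP_upper) auto
  finally show ?thesis .
qed

end
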